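(* Let $\alpha\in(0,1)$, $\gamma,\beta>0$, $r_0>0$, $Y=B(0,r_0)\subset\mathbb R\oplus\mathbb R^{d-1}$, $\mathcal X(x)=\|x\|^\alpha Ax$ with $A=\gamma\,\mathrm{Id}_{\mathbb R}\oplus(-\beta\,\mathrm{Id}_{\mathbb R^{d-1}})$. Let $x$ be a trajectory of $\mathcal X$ entering $Y$ at time $0$ and leaving it at time $T_0$, $\theta(t)$ the angle between $x(t)$ and $\mathbb R\times\{0\}$, and let $s\in(0,\infty)$ with $\tan\theta(T_0)<s<\tan\theta(0)$, with $T_s$ the time at which $\tan\theta(T_s)=s$. (a) If $s^2>\gamma/\beta$, then $\chi(s):=\frac{\gamma}{\gamma+\beta}\left(1+\frac1{s^2}\right)<1$ and $T_s\le\chi(s)T_0$. (b) If $s^2<\gamma/\beta$, then $\chi'(s):=\frac{\gamma-\beta s^2}{\gamma+\beta}>0$ and $T_s\ge\chi'(s)T_0$. *)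

theory Defs
  imports "HOL-Analysis.Analysis"
begin

text \<open>Points of R^d = R (+) R^(d-1) are pairs (u, v) with u :: real, v :: real^'m
  (Euclidean norm on the product).\<close>

definition A_op :: "real \<Rightarrow> real \<Rightarrow> real \<times> (real^'m) \<Rightarrow> real \<times> (real^'m)" where
  "A_op \<gamma> \<beta> y = (\<gamma> * fst y, (- \<beta>) *\<^sub>R snd y)"

definition vfield :: "real \<Rightarrow> real \<Rightarrow> real \<Rightarrow> real \<times> (real^'m) \<Rightarrow> real \<times> (real^'m)" where
  "vfield \<alpha> \<gamma> \<beta> y = (norm y powr \<alpha>) *\<^sub>R A_op \<gamma> \<beta> y"

definition axis_angle :: "real \<times> (real^'m) \<Rightarrow> real" where
  "axis_angle y = arccos (\<bar>fst y\<bar> / norm y)"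

definition chi :: "real \<Rightarrow> real \<Rightarrow> real \<Rightarrow> real" where
  "chi \<gamma> \<beta> s = \<gamma> / (\<gamma> + \<beta>) * (1 + 1 / s^2)"

definition chi' :: "real \<Rightarrow> real \<Rightarrow> real \<Rightarrow> real" where
  "chi' \<gamma> \<beta> s = (\<gamma> - \<beta> * s^2) / (\<gamma> + \<beta>)"

end

theory Submission
  imports Defs
begin

lemma incr_helper:
  fixes f f' :: "real \<Rightarrow> real"
  assumes der: "\<forall>t\<in>{a..b}. (f has_real_derivative f' t) (at t within {a..b})"
    and nn: "\<forall>t\<in>{p<..<q}. f' t \<ge> 0" and "a \<le> p" "p \<le> q" "q \<le> b"
  shows "f p \<le> f q"
proof (rule DERIV_nonneg_imp_increasing_open[OF \<open>p\<le>q\<close>])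
  fix t assume "p<t" "t<q"
  then have "a<t" "t<b" using assms by auto
  then have "(f has_real_derivative f' t) (at t within {a..b})" using der by auto
  then have "(f has_real_derivative f' t) (at t)" using at_within_Icc_at[of a t b] \<open>a<t\<close> \<open>t<b\<close> by simp
  thus "\<exists>y. DERIV f t :> y \<and> y\<ge>0" using nn \<open>p<t\<close> \<open>t<q\<close> by auto
next
  have "continuous_on {a..b} f" using der
    by (meson DERIV_continuous continuous_on_eq_continuous_within)
  thus "continuous_on {p..q} f" by (rule continuous_on_subset) (use assms in auto)
qed

theorem lemma7p5:
  fixes x :: "real \<Rightarrow> real \<times> (real^'m)"
    and \<alpha> \<gamma> \<beta> r0 T0 s Ts :: real
  assumes "0 < \<alpha>" "\<alpha> < 1" "0 < \<gamma>" "0 < \<beta>" "0 < r0"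
    and "0 < T0"
    and traj: "\<forall>t\<in>{0..T0}. (x has_vector_derivative vfield \<alpha> \<gamma> \<beta> (x t)) (at t within {0..T0})"
    and enter: "norm (x 0) = r0"
    and leave: "norm (x T0) = r0"
    and inside: "\<forall>t\<in>{0<..<T0}. x t \<in> ball 0 r0"
    and "0 < s"
    and "tan (axis_angle (x T0)) < s" "s < tan (axis_angle (x 0))"
    and "Ts \<in> {0..T0}" "tan (axis_angle (x Ts)) = s"
  shows "(s^2 > \<gamma> / \<beta> \<longrightarrow> chi \<gamma> \<beta> s < 1 \<and> Ts \<le> chi \<gamma> \<beta> s * T0)
       \<and> (s^2 < \<gamma> / \<beta> \<longrightarrow> chi' \<gamma> \<beta> s > 0 \<and> Ts \<ge> chi' \<gamma> \<beta> s * T0)"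
proof -
  define D where "D = {0..T0}"
  define u where "u t = fst (x t)" for t
  define v where "v t = snd (x t)" for t
  define V where "V t = inner (v t) (v t)" for t
  define N where "N t = (u t)^2 + V t" for t
  define \<rho> where "\<rho> t = norm (x t) powr \<alpha>" for t
  have Vnn: "V t \<ge> 0" for t by (simp add: V_def)
  have Nnn: "N t \<ge> 0" for t using Vnn[of t] by (simp add: N_def)
  have normx: "norm (x t) = sqrt (N t)" for t
  proof -
    have "norm (x t) = norm (u t, v t)" by (simp add: u_def v_def)
    also have "\<dots> = sqrt (N t)" by (simp add: norm_Pair N_def V_def power2_norm_eq_inner)
    finally show ?thesis .
  qed
  have vf: "vfield \<alpha> \<gamma> \<beta> (x t) = (\<rho> t * (\<gamma> * u t), \<rho> t *\<^sub>R ((-\<beta>) *\<^sub>R v t))" for t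
    by (simp add: vfield_def A_op_def \<rho>_def u_def v_def)
  have hu: "(u has_real_derivative \<rho> t * \<gamma> * u t) (at t within D)" if "t \<in> D" for t
  proof -
    have "(x has_vector_derivative vfield \<alpha> \<gamma> \<beta> (x t)) (at t within D)" using traj that D_def by auto
    from bounded_linear.has_vector_derivative[OF bounded_linear_fst this]
    show ?thesis unfolding has_real_derivative_iff_has_vector_derivative vf
      by (simp add: u_def[abs_def] mult.assoc)
  qed
  have hv: "(v has_vector_derivative \<rho> t *\<^sub>R ((-\<beta>) *\<^sub>R v t)) (at t within D)" if "t \<in> D" for t
  proof -
    have "(x has_vector_derivative vfield \<alpha> \<gamma> \<beta> (x t)) (at t within D)" using traj that D_def by auto
    from bounded_linear.has_vector_derivative[OF bounded_linear_snd this]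
    show ?thesis unfolding vf by (simp add: v_def[abs_def])
  qed
  have hV: "(V has_real_derivative - 2 * \<beta> * \<rho> t * V t) (at t within D)" if "t \<in> D" for t
  proof -
    from bounded_bilinear.has_vector_derivative[OF bounded_bilinear_inner hv[OF that] hv[OF that]]
    show ?thesis unfolding has_real_derivative_iff_has_vector_derivative
      by (simp add: V_def[abs_def] inner_commute algebra_simps)
  qed
  have hN: "(N has_real_derivative 2 * \<rho> t * (\<gamma> * (u t)^2 - \<beta> * V t)) (at t within D)" if "t \<in> D" for t
  proof -
    have "((\<lambda>t. (u t)^2 + V t) has_real_derivative 2 * \<rho> t * (\<gamma> * (u t)^2 - \<beta> * V t)) (at t within D)"
      by (rule derivative_eq_intros hu[OF that] hV[OF that] refl)+ (simp add: algebra_simps power2_eq_square)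
    thus ?thesis by (simp add: N_def[abs_def])
  qed
  have N0: "N 0 = r0^2" and NT0: "N T0 = r0^2"
    using enter leave normx[of 0] normx[of T0] Nnn[of 0] Nnn[of T0] \<open>0<r0\<close>
    by (metis real_sqrt_pow2)+
  have Nle: "N t \<le> r0^2" if "t \<in> D" for t
  proof -
    have "norm (x t) \<le> r0"
    proof (cases "t = 0 \<or> t = T0")
      case True thus ?thesis using enter leave by auto
    next
      case False then have "t \<in> {0<..<T0}" using that D_def by auto
      hence "norm (x t) < r0" using inside by (auto simp: dist_norm)
      thus ?thesis by simp
    qed
    then have "sqrt (N t) \<le> sqrt (r0^2)" using normx \<open>0<r0\<close> by simp
    thus ?thesis using real_sqrt_le_iff by blast
  qed
  define R where "R = r0 powr \<alpha>"
  have \<rho>nn: "\<rho> t \<ge> 0" for t by (simp add: \<rho>_def)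
  have \<rho>le: "\<rho> t \<le> R" if "t \<in> D" for t
  proof -
    have "norm (x t) \<le> r0" using Nle[OF that] normx[of t] \<open>0<r0\<close>
      by (metis abs_of_pos real_sqrt_abs real_sqrt_le_mono)
    thus ?thesis unfolding \<rho>_def R_def using \<open>0<\<alpha>\<close> by (simp add: powr_mono2)
  qed
  define M where "M = 2 * \<beta> * R"
  define g where "g t = N t * exp (M * t)" for t
  have Npos: "N t > 0" if "t \<in> D" for t
  proof -
    have "\<forall>t\<in>{0..T0}. (g has_real_derivative
       (2 * \<rho> t * (\<gamma> * (u t)^2 - \<beta> * V t)) * exp (M * t) + N t * (exp (M * t) * M)) (at t within {0..T0})"
    proof
      fix t assume t: "t \<in> {0..T0}"
      show "(g has_real_derivative
       (2 * \<rho> t * (\<gamma> * (u t)^2 - \<beta> * V t)) * exp (M * t) + N t * (exp (M * t) * M)) (at t within {0..T0})"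
        unfolding g_def[abs_def]
        by (rule derivative_eq_intros hN[OF t[folded D_def], unfolded D_def] refl)+ simp
    qed
    moreover have "\<forall>t\<in>{0<..<T0}. 0 \<le> (2 * \<rho> t * (\<gamma> * (u t)^2 - \<beta> * V t)) * exp (M * t) + N t * (exp (M * t) * M)"
    proof
      fix t assume t: "t \<in> {0<..<T0}"
      then have tD: "t \<in> D" by (auto simp: D_def)
      have "\<rho> t * V t \<le> R * N t"
        using \<rho>le[OF tD] \<rho>nn[of t] Vnn[of t] Nnn[of t] by (intro mult_mono) (auto simp: N_def)
      moreover have "0 \<le> \<rho> t * (u t)^2" using \<rho>nn[of t] by simp
      ultimately have a1: "\<beta> * (\<rho> t * V t) \<le> \<beta> * (R * N t)" and a2: "0 \<le> \<gamma> * (\<rho> t * (u t)^2)"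
        using \<open>0<\<gamma>\<close> \<open>0<\<beta>\<close> by (auto intro: mult_left_mono)
      have e: "2 * \<rho> t * (\<gamma> * (u t)^2 - \<beta> * V t) + N t * M
          = 2*(\<gamma> * (\<rho> t * (u t)^2)) - 2*(\<beta> * (\<rho> t * V t)) + 2*(\<beta> * (R * N t))"
        by (simp add: M_def algebra_simps)
      have "0 \<le> 2 * \<rho> t * (\<gamma> * (u t)^2 - \<beta> * V t) + N t * M"
        unfolding e using a1 a2 by linarith
      then have "0 \<le> exp (M*t) * (2 * \<rho> t * (\<gamma> * (u t)^2 - \<beta> * V t) + N t * M)" by simp
      thus "0 \<le> (2 * \<rho> t * (\<gamma> * (u t)^2 - \<beta> * V t)) * exp (M * t) + N t * (exp (M * t) * M)"
        by (simp add: algebra_simps)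
    qed
    ultimately have "g 0 \<le> g t" using that D_def by (intro incr_helper[of 0 T0 g]) auto
    then have "r0^2 \<le> N t * exp (M * t)" using N0 by (simp add: g_def)
    moreover have "r0^2 > 0" using \<open>0<r0\<close> by simp
    ultimately have "N t * exp (M*t) > 0" by linarith
    thus ?thesis using Nnn[of t] by (simp add: zero_less_mult_iff)
  qed
  define c where "c t = (u t)^2 / N t" for t
  have cle: "c t \<le> 1" and cnn: "0 \<le> c t" for t
  proof -
    have "(u t)^2 \<le> N t" using Vnn[of t] by (simp add: N_def)
    thus "c t \<le> 1" "0 \<le> c t" using Nnn[of t] unfolding c_def
      by (cases "N t = 0"; simp add: divide_le_eq_1)+
  qed
  have hc: "\<forall>t\<in>{0..T0}. (c has_real_derivative 2 * (\<gamma>+\<beta>) * \<rho> t * (u t)^2 * V t / (N t)^2) (at t within {0..T0})"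
  proof
    fix t assume t: "t \<in> {0..T0}"
    then have tD: "t \<in> D" by (simp add: D_def)
    have Np: "N t \<noteq> 0" using Npos[OF tD] by simp
    have "((\<lambda>t. (u t)^2 / N t) has_real_derivative
        (2 * u t * (\<rho> t * \<gamma> * u t) * N t - (u t)^2 * (2 * \<rho> t * (\<gamma> * (u t)^2 - \<beta> * V t))) / (N t * N t)) (at t within D)"
      using DERIV_divide[OF DERIV_power[OF hu[OF tD], of 2] hN[OF tD] Np] by (simp add: power2_eq_square mult_ac)
    moreover have "(2 * u t * (\<rho> t * \<gamma> * u t) * N t - (u t)^2 * (2 * \<rho> t * (\<gamma> * (u t)^2 - \<beta> * V t))) / (N t * N t)
       = 2 * (\<gamma>+\<beta>) * \<rho> t * (u t)^2 * V t / (N t)^2"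
      by (simp add: N_def power2_eq_square algebra_simps)
    ultimately show "(c has_real_derivative 2 * (\<gamma>+\<beta>) * \<rho> t * (u t)^2 * V t / (N t)^2) (at t within {0..T0})"
      by (simp add: c_def[abs_def] D_def)
  qed
  have cmono: "c p \<le> c q" if "0 \<le> p" "p \<le> q" "q \<le> T0" for p q
    using hc that by (intro incr_helper[of 0 T0 c]) (auto intro!: divide_nonneg_nonneg mult_nonneg_nonneg \<rho>nn Vnn
      simp: \<open>0<\<gamma>\<close> \<open>0<\<beta>\<close> less_imp_le)
  define \<phi> where "\<phi> t = N t powr (-\<alpha>/2)" for t
  have h\<phi>: "\<forall>t\<in>{0..T0}. (\<phi> has_real_derivative - \<alpha> * ((\<gamma>+\<beta>) * c t - \<beta>)) (at t within {0..T0})"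
  proof
    fix t assume t: "t \<in> {0..T0}"
    then have tD: "t \<in> D" by (simp add: D_def)
    have Np: "N t > 0" using Npos[OF tD] by simp
    have d: "(\<phi> has_real_derivative (-\<alpha>/2) * N t powr (-\<alpha>/2 - 1) * (2 * \<rho> t * (\<gamma> * (u t)^2 - \<beta> * V t))) (at t within D)"
      unfolding \<phi>_def[abs_def]
      by (rule DERIV_chain2[OF has_real_derivative_powr[OF Np] hN[OF tD]])
    have r: "\<rho> t = N t powr (\<alpha>/2)"
      unfolding \<rho>_def normx using Nnn[of t]
      by (simp add: powr_half_sqrt[symmetric] powr_powr)
    have p: "N t powr (-\<alpha>/2 - 1) * N t powr (\<alpha>/2) = 1 / N t"
      using Np by (simp add: powr_add[symmetric] powr_neg_one)
    have "(-\<alpha>/2) * N t powr (-\<alpha>/2 - 1) * (2 * \<rho> t * (\<gamma> * (u t)^2 - \<beta> * V t))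
        = - \<alpha> * (N t powr (-\<alpha>/2 - 1) * N t powr (\<alpha>/2)) * (\<gamma> * (u t)^2 - \<beta> * V t)"
      unfolding r by (simp add: algebra_simps)
    also have "\<dots> = - \<alpha> * ((\<gamma>+\<beta>) * c t - \<beta>)"
      unfolding p c_def using Np by (simp add: field_simps N_def)
    finally have e: "(-\<alpha>/2) * N t powr (-\<alpha>/2 - 1) * (2 * \<rho> t * (\<gamma> * (u t)^2 - \<beta> * V t))
        = - \<alpha> * ((\<gamma>+\<beta>) * c t - \<beta>)" .
    show "(\<phi> has_real_derivative - \<alpha> * ((\<gamma>+\<beta>) * c t - \<beta>)) (at t within {0..T0})"
      using d unfolding e D_def .
  qed
  have \<phi>eq: "\<phi> 0 = \<phi> T0" by (simp add: \<phi>_def N0 NT0)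
  have TsD: "0 \<le> Ts" "Ts \<le> T0" using \<open>Ts \<in> {0..T0}\<close> by auto
  define cs where "cs = c Ts"
  define a where "a = \<bar>u Ts\<bar> / sqrt (N Ts)"
  have ax: "axis_angle (x Ts) = arccos a"
    by (simp add: axis_angle_def a_def u_def normx)
  have a2: "a^2 = cs"
    using Nnn[of Ts] by (simp add: a_def cs_def c_def power_divide)
  have a0: "0 \<le> a" unfolding a_def using Nnn[of Ts] by (intro divide_nonneg_nonneg) auto
  have a1: "a \<le> 1" using a2 cle[of Ts] a0 unfolding cs_def
    by (metis abs_of_nonneg abs_square_le_1)
  have tanv: "tan (arccos a) = sqrt (1 - a^2) / a"
    using a0 a1 by (simp add: tan_def sin_arccos cos_arccos)
  have "a \<noteq> 0"
  proof
    assume "a = 0" then have "tan (axis_angle (x Ts)) = 0" unfolding ax tanv by simp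
    thus False using \<open>tan (axis_angle (x Ts)) = s\<close> \<open>0<s\<close> by simp
  qed
  then have apos: "0 < a" using a0 by simp
  have "s * a = sqrt (1 - a^2)" using tanv ax \<open>tan (axis_angle (x Ts)) = s\<close> apos by (simp add: field_simps)
  then have "(s*a)^2 = 1 - a^2" using a1 a0 by (simp add: power_le_one)
  then have csrel: "cs * (1 + s^2) = 1" using a2 by (simp add: algebra_simps power_mult_distrib)
  have sp: "0 < 1 + s^2" by (simp add: add_pos_nonneg)
  then have cs_eq: "cs = 1 / (1 + s^2)" using csrel by (simp add: eq_divide_eq)
  have cbelow: "c t \<le> cs" if "0 \<le> t" "t \<le> Ts" for t using cmono that TsD unfolding cs_def by auto
  have cabove: "cs \<le> c t" if "Ts \<le> t" "t \<le> T0" for t using cmono that TsD unfolding cs_def by auto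
  have d\<phi>: "(\<phi> has_real_derivative - \<alpha> * ((\<gamma>+\<beta>) * c t - \<beta>)) (at t within {0..T0})" if "t \<in> {0..T0}" for t
    using h\<phi> that by auto
  define E where "E t = - \<alpha> * ((\<gamma>+\<beta>) * c t - \<beta>)" for t
  have dH1: "\<forall>t\<in>{0..T0}. ((\<lambda>t. \<gamma>*t + (1/\<alpha>)*\<phi> t) has_real_derivative (\<gamma>*1 + (1/\<alpha>)*E t)) (at t within {0..T0})"
    unfolding E_def by (intro ballI DERIV_add DERIV_cmult DERIV_ident d\<phi>)
  have dH2: "\<forall>t\<in>{0..T0}. ((\<lambda>t. \<gamma>*t + (1/\<alpha>)*\<phi> t + (-(\<gamma>+\<beta>)*(1-cs))*t) has_real_derivative (\<gamma>*1 + (1/\<alpha>)*E t + (-(\<gamma>+\<beta>)*(1-cs))*1)) (at t within {0..T0})"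
    unfolding E_def by (intro ballI DERIV_add DERIV_cmult DERIV_ident d\<phi>)
  have dK1: "\<forall>t\<in>{0..T0}. ((\<lambda>t. \<beta>*t + (-1/\<alpha>)*\<phi> t) has_real_derivative (\<beta>*1 + (-1/\<alpha>)*E t)) (at t within {0..T0})"
    unfolding E_def by (intro ballI DERIV_add DERIV_cmult DERIV_ident d\<phi>)
  have dK2: "\<forall>t\<in>{0..T0}. ((\<lambda>t. \<beta>*t + (-1/\<alpha>)*\<phi> t + (-(\<gamma>+\<beta>)*cs)*t) has_real_derivative (\<beta>*1 + (-1/\<alpha>)*E t + (-(\<gamma>+\<beta>)*cs)*1)) (at t within {0..T0})"
    unfolding E_def by (intro ballI DERIV_add DERIV_cmult DERIV_ident d\<phi>)
  have Ediv: "(1/\<alpha>) * E t = \<beta> - (\<gamma>+\<beta>) * c t" for t using \<open>0<\<alpha>\<close> by (simp add: E_def field_simps)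
  have Ediv': "(-1/\<alpha>) * E t = (\<gamma>+\<beta>) * c t - \<beta>" for t using \<open>0<\<alpha>\<close> by (simp add: E_def field_simps)
  have gb: "0 < \<gamma> + \<beta>" using \<open>0<\<gamma>\<close> \<open>0<\<beta>\<close> by simp
  have i1: "\<gamma>*Ts + (1/\<alpha>)*\<phi> Ts \<le> \<gamma>*T0 + (1/\<alpha>)*\<phi> T0"
  proof (rule incr_helper[OF dH1, where p=Ts and q=T0])
    show "\<forall>t\<in>{Ts<..<T0}. 0 \<le> \<gamma>*1 + (1/\<alpha>)*E t"
    proof
      fix t assume "t \<in> {Ts<..<T0}"
      have "(\<gamma>+\<beta>) * c t \<le> (\<gamma>+\<beta>) * 1" using cle[of t] gb by (intro mult_left_mono) auto
      thus "0 \<le> \<gamma>*1 + (1/\<alpha>)*E t" unfolding Ediv by simp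
    qed
  qed (use TsD in auto)
  have i2: "\<gamma>*0 + (1/\<alpha>)*\<phi> 0 + (-(\<gamma>+\<beta>)*(1-cs))*0 \<le> \<gamma>*Ts + (1/\<alpha>)*\<phi> Ts + (-(\<gamma>+\<beta>)*(1-cs))*Ts"
  proof (rule incr_helper[OF dH2, where p=0 and q=Ts])
    show "\<forall>t\<in>{0<..<Ts}. 0 \<le> \<gamma>*1 + (1/\<alpha>)*E t + (-(\<gamma>+\<beta>)*(1-cs))*1"
    proof
      fix t assume "t \<in> {0<..<Ts}"
      then have "(\<gamma>+\<beta>) * c t \<le> (\<gamma>+\<beta>) * cs" using cbelow[of t] gb by (intro mult_left_mono) auto
      thus "0 \<le> \<gamma>*1 + (1/\<alpha>)*E t + (-(\<gamma>+\<beta>)*(1-cs))*1" unfolding Ediv by (simp add: algebra_simps)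
    qed
  qed (use TsD in auto)
  have k1: "\<beta>*0 + (-1/\<alpha>)*\<phi> 0 \<le> \<beta>*Ts + (-1/\<alpha>)*\<phi> Ts"
  proof (rule incr_helper[OF dK1, where p=0 and q=Ts])
    show "\<forall>t\<in>{0<..<Ts}. 0 \<le> \<beta>*1 + (-1/\<alpha>)*E t"
    proof
      fix t assume "t \<in> {0<..<Ts}"
      have "0 \<le> (\<gamma>+\<beta>) * c t" using cnn[of t] gb by simp
      thus "0 \<le> \<beta>*1 + (-1/\<alpha>)*E t" unfolding Ediv' by simp
    qed
  qed (use TsD in auto)
  have k2: "\<beta>*Ts + (-1/\<alpha>)*\<phi> Ts + (-(\<gamma>+\<beta>)*cs)*Ts \<le> \<beta>*T0 + (-1/\<alpha>)*\<phi> T0 + (-(\<gamma>+\<beta>)*cs)*T0"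
  proof (rule incr_helper[OF dK2, where p=Ts and q=T0])
    show "\<forall>t\<in>{Ts<..<T0}. 0 \<le> \<beta>*1 + (-1/\<alpha>)*E t + (-(\<gamma>+\<beta>)*cs)*1"
    proof
      fix t assume "t \<in> {Ts<..<T0}"
      then have "(\<gamma>+\<beta>) * cs \<le> (\<gamma>+\<beta>) * c t" using cabove[of t] gb by (intro mult_left_mono) auto
      thus "0 \<le> \<beta>*1 + (-1/\<alpha>)*E t + (-(\<gamma>+\<beta>)*cs)*1" unfolding Ediv' by (simp add: algebra_simps)
    qed
  qed (use TsD in auto)
  have A: "(\<gamma>+\<beta>)*(1-cs)*Ts \<le> \<gamma>*T0" using i1 i2 \<phi>eq by (simp add: algebra_simps)
  have B: "(\<gamma>+\<beta>)*cs*(T0-Ts) \<le> \<beta>*T0" using k1 k2 \<phi>eq by (simp add: algebra_simps)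
  have s2: "0 < s^2" using \<open>0<s\<close> by simp
  show ?thesis
  proof (intro conjI impI)
    assume h: "s^2 > \<gamma>/\<beta>"
    then have gs: "\<gamma> < s^2 * \<beta>" using \<open>0<\<beta>\<close> by (simp add: pos_divide_less_eq)
    have ce: "chi \<gamma> \<beta> s = (\<gamma> + \<gamma> * s^2) / ((\<gamma> + \<beta>) * s^2)" unfolding chi_def using s2 by (simp add: field_simps)
    have "\<gamma> + \<gamma> * s^2 < (\<gamma>+\<beta>) * s^2" using gs by (simp add: algebra_simps)
    moreover have "0 < (\<gamma>+\<beta>) * s^2" using gb s2 by simp
    ultimately show "chi \<gamma> \<beta> s < 1" unfolding ce by simp
    have "1 - cs = s^2/(1+s^2)" using sp by (simp add: cs_eq field_simps)
    then have "(\<gamma>+\<beta>) * s^2*Ts/(1+s^2) \<le> \<gamma>*T0" using A by simp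
    then have C: "(\<gamma>+\<beta>) * s^2*Ts \<le> \<gamma>*T0*(1+s^2)" using sp by (simp add: pos_divide_le_eq)
    have "chi \<gamma> \<beta> s * T0 = \<gamma>*T0*(1+s^2)/((\<gamma>+\<beta>) * s^2)"
      unfolding chi_def using s2 gb by (simp add: field_simps)
    moreover have "Ts \<le> \<gamma>*T0*(1+s^2)/((\<gamma>+\<beta>) * s^2)"
      using C s2 gb by (simp add: pos_le_divide_eq mult_ac)
    ultimately show "Ts \<le> chi \<gamma> \<beta> s * T0" by simp
  next
    assume h: "s^2 < \<gamma>/\<beta>"
    then have gs: "s^2 * \<beta> < \<gamma>" using \<open>0<\<beta>\<close> by (simp add: pos_less_divide_eq)
    show "chi' \<gamma> \<beta> s > 0" unfolding chi'_def using gs gb by (simp add: mult.commute)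
    have "(\<gamma>+\<beta>)*(T0-Ts)/(1+s^2) \<le> \<beta>*T0" using B by (simp add: cs_eq)
    then have C: "(\<gamma>+\<beta>)*(T0-Ts) \<le> \<beta>*T0*(1+s^2)" using sp by (simp add: pos_divide_le_eq)
    then have C': "(\<gamma> - \<beta> * s^2)*T0 \<le> Ts*(\<gamma>+\<beta>)" by (simp add: algebra_simps)
    show "Ts \<ge> chi' \<gamma> \<beta> s * T0"
      unfolding chi'_def using C' gb by (simp add: pos_divide_le_eq)
  qed
qed

end
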